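(* Let $p$ be a prime and $n\ge 3$. Every covering group $H$ of $\mathrm{UT}_n(\mathbb F_p)$ is a stem group, i.e. $Z(H)\le[H,H]$.
   Context: $\mathrm{UT}_n(\mathbb F_p)$ is the group of upper unitriangular $n\times n$ matrices over $\mathbb F_p$. A covering group of a finite group $G$ is a group $H$ with a subgroup $A\le Z(H)\cap[H,H]$ and $H/A\cong G$, of maximal order among such extensions (equivalently $|A|=|H_2(G,\mathbb Z)|$). *)

theory Defs
  imports "HOL-Algebra.Algebra"
begin

text \<open>Matrices are functions nat => nat => nat, indices 0..n-1, entries in {0..<p}
  (representatives of F_p), and all entries outside the n x n block equal 0.\<close>

definition UT :: "nat \<Rightarrow> nat \<Rightarrow> (nat \<Rightarrow> nat \<Rightarrow> nat) monoid" where
  "UT n p = \<lparr> carrier = {M. (\<forall>i j. M i j < p)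
                          \<and> (\<forall>i j. (n \<le> i \<or> n \<le> j) \<longrightarrow> M i j = 0)
                          \<and> (\<forall>i<n. M i i = 1)
                          \<and> (\<forall>i j. j < i \<longrightarrow> M i j = 0)},
              monoid.mult = (\<lambda>A B i j. if i < n \<and> j < n then (\<Sum>k<n. A i k * B k j) mod p else 0),
              monoid.one = (\<lambda>i j. if i < n \<and> j = i then 1 else 0) \<rparr>"

definition group_center :: "('a, 'b) monoid_scheme \<Rightarrow> 'a set" where
  "group_center H = {z \<in> carrier H. \<forall>x \<in> carrier H. z \<otimes>\<^bsub>H\<^esub> x = x \<otimes>\<^bsub>H\<^esub> z}"

definition stem_extension :: "('c, 'd) monoid_scheme \<Rightarrow> ('a, 'b) monoid_scheme \<Rightarrow> 'a set \<Rightarrow> bool" where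
  "stem_extension G H A \<longleftrightarrow> group H \<and> subgroup A H
      \<and> A \<subseteq> group_center H \<inter> derived H (carrier H)
      \<and> (H Mod A) \<cong> G"

text \<open>Every finite group is isomorphic to a group with carrier in nat,
  so comparing against stem extensions with carrier type nat covers all of them.\<close>
definition covering_group :: "('c, 'd) monoid_scheme \<Rightarrow> ('a, 'b) monoid_scheme \<Rightarrow> bool" where
  "covering_group G H \<longleftrightarrow> finite (carrier H) \<and> (\<exists>A. stem_extension G H A)
      \<and> (\<forall>(K :: nat monoid) B. stem_extension G K B \<and> finite (carrier K) \<longrightarrow> card (carrier K) \<le> card (carrier H))"

end

theory Submission
  imports Defs
begin


definition EM :: "nat \<Rightarrow> nat \<Rightarrow> nat \<Rightarrow> nat \<Rightarrow> nat \<Rightarrow> nat \<Rightarrow> nat" where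
  "EM n a b c = (\<lambda>i j. if i<n \<and> j=i then 1 else if i=a \<and> j=b then c else 0)"

lemma EM_left_sum:
  assumes "a < b" "b < n" "i < n"
  shows "(\<Sum>k<n. EM n a b c i k * Y k j) = Y i j + (if i=a then c * Y b j else 0)"
proof -
  have "(\<Sum>k<n. EM n a b c i k * Y k j) = (\<Sum>k<n. (if k = i then Y i j else 0) + (if k = b then (if i=a then c * Y b j else 0) else 0))"
    using assms by (intro sum.cong) (auto simp: EM_def)
  also have "\<dots> = Y i j + (if i=a then c * Y b j else 0)"
    using assms by (simp add: sum.distrib)
  finally show ?thesis .
qed

lemma EM_right_sum:
  assumes "a < b" "b < n" "j < n"
  shows "(\<Sum>k<n. Y i k * EM n a b c k j) = Y i j + (if j=b then Y i a * c else 0)"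
proof -
  have "(\<Sum>k<n. Y i k * EM n a b c k j) = (\<Sum>k<n. (if k = j then Y i j else 0) + (if k = a then (if j=b then Y i a * c else 0) else 0))"
    using assms by (intro sum.cong) (auto simp: EM_def)
  also have "\<dots> = Y i j + (if j=b then Y i a * c else 0)"
    using assms by (simp add: sum.distrib)
  finally show ?thesis .
qed

lemma EM_carrier:
  assumes "a < b" "b < n" "c < p" "1 < p"
  shows "EM n a b c \<in> carrier (UT n p)"
  using assms by (auto simp: EM_def UT_def)

lemma UT_one_EM: "one (UT n p) = EM n 0 1 0"
  by (auto simp: UT_def EM_def fun_eq_iff)



lemma UT_mult: "A \<otimes>\<^bsub>UT n p\<^esub> B = (\<lambda>i j. if i < n \<and> j < n then (\<Sum>k<n. A i k * B k j) mod p else 0)"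
  by (simp add: UT_def)

lemma mod_cancel_aux: "(x + y) mod (p::nat) = x mod p \<Longrightarrow> y < p \<Longrightarrow> y = 0"
  by (metis diff_add_inverse le_add1 mod_eq_dvd_iff_nat nat_dvd_not_less nat_less_le zero_le)

lemma UT_r_one:
  assumes "Y \<in> carrier (UT n p)" "1 < n"
  shows "Y \<otimes>\<^bsub>UT n p\<^esub> \<one>\<^bsub>UT n p\<^esub> = Y"
proof -
  have c: "\<And>i j. Y i j < p" "\<And>i j. n \<le> i \<or> n \<le> j \<Longrightarrow> Y i j = 0"
    using assms by (auto simp: UT_def)
  show ?thesis
    unfolding UT_mult UT_one_EM using assms c
    by (auto simp: fun_eq_iff EM_right_sum EM_def[of n 0 1 0])
qed

lemma UT_group:
  assumes "group K" "K \<cong> UT n p" "1 < p" "1 < n"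
  shows "group (UT n p)"
proof -
  obtain f where f: "f \<in> iso K (UT n p)" using assms(2) unfolding is_iso_def by auto
  let ?G1 = "UT n p \<lparr> one := f \<one>\<^bsub>K\<^esub> \<rparr>"
  have g1: "group ?G1" using group.iso_imp_img_group[OF assms(1) f] .
  have e: "f \<one>\<^bsub>K\<^esub> \<in> carrier (UT n p)"
    using f group.is_monoid[OF assms(1)] by (auto simp: iso_def intro: hom_in_carrier)
  have I: "\<one>\<^bsub>UT n p\<^esub> \<in> carrier (UT n p)"
    using EM_carrier[of 0 1 n 0 p] assms UT_one_EM by simp
  have "f \<one>\<^bsub>K\<^esub> \<otimes>\<^bsub>UT n p\<^esub> \<one>\<^bsub>UT n p\<^esub> = \<one>\<^bsub>UT n p\<^esub>"
    using monoid.l_one[OF group.is_monoid[OF g1], of "\<one>\<^bsub>UT n p\<^esub>"] I by simp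
  moreover have "f \<one>\<^bsub>K\<^esub> \<otimes>\<^bsub>UT n p\<^esub> \<one>\<^bsub>UT n p\<^esub> = f \<one>\<^bsub>K\<^esub>"
    using UT_r_one[OF e assms(4)] .
  ultimately have "f \<one>\<^bsub>K\<^esub> = \<one>\<^bsub>UT n p\<^esub>" by simp
  then have "?G1 = UT n p" by simp
  with g1 show ?thesis by simp
qed

lemma UT_center_form:
  assumes Y: "Y \<in> group_center (UT n p)" and p: "1 < p" and n: "3 \<le> n"
  shows "Y = EM n 0 (n-1) (Y 0 (n-1))"
proof -
  have Yc: "Y \<in> carrier (UT n p)" using Y by (simp add: group_center_def)
  have c: "\<And>i j. Y i j < p" "\<And>i j. n \<le> i \<or> n \<le> j \<Longrightarrow> Y i j = 0"
     "\<And>i. i < n \<Longrightarrow> Y i i = 1" "\<And>i j. j < i \<Longrightarrow> Y i j = 0"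
    using Yc by (auto simp: UT_def)
  have comm: "(Y i j + (if j = Suc a then Y i a else 0)) mod p = (Y i j + (if i = a then Y (Suc a) j else 0)) mod p"
    if "Suc a < n" "i < n" "j < n" for a i j
  proof -
    have "EM n a (Suc a) 1 \<in> carrier (UT n p)" using EM_carrier[of a "Suc a" n 1 p] that p by simp
    then have "Y \<otimes>\<^bsub>UT n p\<^esub> EM n a (Suc a) 1 = EM n a (Suc a) 1 \<otimes>\<^bsub>UT n p\<^esub> Y"
      using Y by (simp add: group_center_def)
    then have "(Y \<otimes>\<^bsub>UT n p\<^esub> EM n a (Suc a) 1) i j = (EM n a (Suc a) 1 \<otimes>\<^bsub>UT n p\<^esub> Y) i j" by simp
    then show ?thesis using that
      by (auto simp: UT_mult EM_left_sum EM_right_sum)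
  qed
  show ?thesis
  proof (intro ext)
    fix i j
    show "Y i j = EM n 0 (n-1) (Y 0 (n-1)) i j"
    proof (cases "i < n \<and> j < n")
      case False then show ?thesis using c(2) n by (auto simp: EM_def)
    next
      case True
      then have ij: "i < n" "j < n" by auto
      consider "j < i" | "j = i" | "i < j" "i = 0" "j = n - 1" | "i < j" "j < n - 1" | "i < j" "0 < i" "j = n - 1"
        using ij by linarith
      then show ?thesis
      proof cases
        case 1 then show ?thesis using c(4) by (auto simp: EM_def)
      next
        case 2 then show ?thesis using c(3) ij by (auto simp: EM_def)
      next
        case 3 then show ?thesis by (auto simp: EM_def)
      next
        case 4
        have "(Y i (Suc j) + Y i j) mod p = Y i (Suc j) mod p"
          using comm[of j i "Suc j"] 4 ij by auto
        then have "Y i j = 0" using mod_cancel_aux c(1) by blast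
        then show ?thesis using 4 by (auto simp: EM_def)
      next
        case 5
        have "(Y (i-1) j + Y i j) mod p = Y (i-1) j mod p"
          using comm[of "i-1" "i-1" j] 5 ij by auto
        then have "Y i j = 0" using mod_cancel_aux c(1) by blast
        then show ?thesis using 5 by (auto simp: EM_def)
      qed
    qed
  qed
qed



lemma UT_comm_eq:
  assumes p: "1 < p" and n: "3 \<le> n" and cp: "c < p"
  shows "EM n 0 (n-1) c \<otimes>\<^bsub>UT n p\<^esub> (EM n 1 (n-1) 1 \<otimes>\<^bsub>UT n p\<^esub> EM n 0 1 c)
       = EM n 0 1 c \<otimes>\<^bsub>UT n p\<^esub> EM n 1 (n-1) 1"
proof -
  let ?A = "EM n 0 1 c" and ?B = "EM n 1 (n-1) 1"
  define C where "C = (\<lambda>i j. if i < n \<and> j < n then (?A i j + (if i = 1 then ?A (n-1) j else 0)) mod p else 0)"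
  have BA: "?B \<otimes>\<^bsub>UT n p\<^esub> ?A = C"
    unfolding UT_mult C_def using n by (auto simp: fun_eq_iff EM_left_sum)
  show ?thesis unfolding BA
  proof (intro ext)
    fix i j
    show "(EM n 0 (n-1) c \<otimes>\<^bsub>UT n p\<^esub> C) i j = (?A \<otimes>\<^bsub>UT n p\<^esub> ?B) i j"
    proof (cases "i < n \<and> j < n")
      case False then show ?thesis by (auto simp: UT_mult)
    next
      case True
      have l: "(EM n 0 (n-1) c \<otimes>\<^bsub>UT n p\<^esub> C) i j = (C i j + (if i = 0 then c * C (n-1) j else 0)) mod p"
        using True n by (simp add: UT_mult EM_left_sum)
      have r: "(?A \<otimes>\<^bsub>UT n p\<^esub> ?B) i j = (?B i j + (if i = 0 then c * ?B 1 j else 0)) mod p"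
        using True n by (simp add: UT_mult EM_left_sum)
      show ?thesis unfolding l r using True n p cp
        by (auto simp: C_def EM_def mod_add_left_eq)
    qed
  qed
qed



lemma UT_center_derived:
  assumes G: "group (UT n p)" and p: "1 < p" and n: "3 \<le> n"
  shows "group_center (UT n p) \<subseteq> derived (UT n p) (carrier (UT n p))"
proof
  interpret G: group "UT n p" by (rule G)
  fix Y assume Y: "Y \<in> group_center (UT n p)"
  define c where "c = Y 0 (n-1)"
  have Ye: "Y = EM n 0 (n-1) c" using UT_center_form[OF Y p n] c_def by simp
  have cp: "c < p" using Y by (auto simp: group_center_def UT_def c_def)
  let ?A = "EM n 0 1 c" and ?B = "EM n 1 (n-1) 1" and ?M = "EM n 0 (n-1) c"
  have Ac: "?A \<in> carrier (UT n p)" using EM_carrier[of 0 1 n c p] n p cp by simp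
  have Bc: "?B \<in> carrier (UT n p)" using EM_carrier[of 1 "n-1" n 1 p] n p by simp
  have Mc: "?M \<in> carrier (UT n p)" using EM_carrier[of 0 "n-1" n c p] n p cp by simp
  have eq: "?M \<otimes>\<^bsub>UT n p\<^esub> (?B \<otimes>\<^bsub>UT n p\<^esub> ?A) = ?A \<otimes>\<^bsub>UT n p\<^esub> ?B"
    using UT_comm_eq[OF p n cp] .
  have "?M = (?A \<otimes>\<^bsub>UT n p\<^esub> ?B) \<otimes>\<^bsub>UT n p\<^esub> inv\<^bsub>UT n p\<^esub> (?B \<otimes>\<^bsub>UT n p\<^esub> ?A)"
    using G.inv_solve_right[of ?M "?A \<otimes>\<^bsub>UT n p\<^esub> ?B" "?B \<otimes>\<^bsub>UT n p\<^esub> ?A"] eq Ac Bc Mc by simp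
  also have "\<dots> = ?A \<otimes>\<^bsub>UT n p\<^esub> ?B \<otimes>\<^bsub>UT n p\<^esub> inv\<^bsub>UT n p\<^esub> ?A \<otimes>\<^bsub>UT n p\<^esub> inv\<^bsub>UT n p\<^esub> ?B"
    using Ac Bc by (simp add: G.inv_mult_group G.m_assoc)
  finally have "?M \<in> derived_set (UT n p) (carrier (UT n p))" using Ac Bc by blast
  then have "?M \<in> derived (UT n p) (carrier (UT n p))"
    unfolding derived_def by (rule generate.incl)
  then show "Y \<in> derived (UT n p) (carrier (UT n p))" using Ye by simp
qed

lemma stem_center:
  assumes H: "group H" and A: "subgroup A H"
    and Asub: "A \<subseteq> group_center H \<inter> derived H (carrier H)"
    and iso: "(H Mod A) \<cong> G" and G: "group G"
    and cG: "group_center G \<subseteq> derived G (carrier G)"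
  shows "group_center H \<subseteq> derived H (carrier H)"
proof
  interpret H: group H by (rule H)
  interpret G: group G by (rule G)
  have nA: "A \<lhd> H"
  proof (rule H.normal_invI[OF A])
    fix x h assume x: "x \<in> carrier H" and h: "h \<in> A"
    then have hc: "h \<in> carrier H" "h \<otimes>\<^bsub>H\<^esub> x = x \<otimes>\<^bsub>H\<^esub> h"
      using Asub by (auto simp: group_center_def)
    then have "x \<otimes>\<^bsub>H\<^esub> h \<otimes>\<^bsub>H\<^esub> inv\<^bsub>H\<^esub> x = h"
      using x by (metis H.inv_closed H.m_assoc H.r_inv H.r_one)
    then show "x \<otimes>\<^bsub>H\<^esub> h \<otimes>\<^bsub>H\<^esub> inv\<^bsub>H\<^esub> x \<in> A" using h by simp
  qed
  interpret N: normal A H by (rule nA)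
  obtain f where f: "f \<in> iso (H Mod A) G" using iso unfolding is_iso_def by auto
  have fh: "f \<in> hom (H Mod A) G" and fb: "bij_betw f (carrier (H Mod A)) (carrier G)"
    using f by (auto simp: iso_def)
  define g where "g = (\<lambda>x. f (A #>\<^bsub>H\<^esub> x))"
  have rh: "(\<lambda>a. A #>\<^bsub>H\<^esub> a) \<in> hom H (H Mod A)" by (rule N.r_coset_hom_Mod)
  have ghom: "g \<in> hom H G"
    using rh fh unfolding g_def hom_def by (auto simp: Pi_def)
  interpret gh: group_hom H G g
    by (rule group_hom.intro[OF H G]) (simp add: group_hom_axioms_def ghom)
  have cm: "carrier (H Mod A) = (\<lambda>x. A #>\<^bsub>H\<^esub> x) ` carrier H"
    by (rule carrier_FactGroup)
  have gsurj: "g ` carrier H = carrier G"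
    using fb cm unfolding g_def bij_betw_def by (auto simp: image_image[symmetric])
  fix z assume z: "z \<in> group_center H"
  then have zc: "z \<in> carrier H" and zcomm: "\<And>x. x \<in> carrier H \<Longrightarrow> z \<otimes>\<^bsub>H\<^esub> x = x \<otimes>\<^bsub>H\<^esub> z"
    by (auto simp: group_center_def)
  have "g z \<in> group_center G"
    unfolding group_center_def
  proof (safe)
    show "g z \<in> carrier G" using zc by simp
    fix y assume "y \<in> carrier G"
    then obtain x where x: "x \<in> carrier H" "y = g x" using gsurj by auto
    show "g z \<otimes>\<^bsub>G\<^esub> y = y \<otimes>\<^bsub>G\<^esub> g z"
      using x zc zcomm[OF x(1)] by (metis gh.hom_mult)
  qed
  then have "g z \<in> derived G (carrier G)" using cG by blast
  also have "derived G (carrier G) = g ` derived H (carrier H)"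
    using gh.derived_img[of "carrier H"] gsurj by simp
  finally obtain d where d: "d \<in> derived H (carrier H)" "g z = g d" by auto
  have dsub: "subgroup (derived H (carrier H)) H" by (rule H.derived_is_subgroup) simp
  have dc: "d \<in> carrier H" using d(1) subgroup.subset[OF dsub] by auto
  have "A #>\<^bsub>H\<^esub> z = A #>\<^bsub>H\<^esub> d"
    using d(2) fb cm zc dc unfolding g_def bij_betw_def inj_on_def by blast
  moreover have "z \<in> A #>\<^bsub>H\<^esub> z" using zc A by (rule H.rcos_self)
  ultimately obtain h where h: "h \<in> A" "z = h \<otimes>\<^bsub>H\<^esub> d" unfolding r_coset_def by auto
  have "h \<in> derived H (carrier H)" using h(1) Asub by auto
  then show "z \<in> derived H (carrier H)"
    using h(2) d(1) subgroup.m_closed[OF dsub] by simp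
qed


lemma central_normal:
  assumes H: "group H" and A: "subgroup A H" and Asub: "A \<subseteq> group_center H"
  shows "A \<lhd> H"
proof (rule group.normal_invI[OF H A])
  interpret H: group H by (rule H)
  fix x h assume x: "x \<in> carrier H" and h: "h \<in> A"
  then have hc: "h \<in> carrier H" "h \<otimes>\<^bsub>H\<^esub> x = x \<otimes>\<^bsub>H\<^esub> h"
    using Asub by (auto simp: group_center_def)
  then have "x \<otimes>\<^bsub>H\<^esub> h \<otimes>\<^bsub>H\<^esub> inv\<^bsub>H\<^esub> x = h"
    using x by (metis H.inv_closed H.m_assoc H.r_inv H.r_one)
  then show "x \<otimes>\<^bsub>H\<^esub> h \<otimes>\<^bsub>H\<^esub> inv\<^bsub>H\<^esub> x \<in> A" using h by simp
qed

theorem mainTheorem14: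
  fixes p n :: nat and H :: "('a, 'b) monoid_scheme"
  assumes "Factorial_Ring.prime p" and "n \<ge> 3" and "covering_group (UT n p) H"
  shows "group_center H \<subseteq> derived H (carrier H)"
proof -
  obtain A where st: "stem_extension (UT n p) H A" using assms(3) by (auto simp: covering_group_def)
  then have H: "group H" and A: "subgroup A H" and Asub: "A \<subseteq> group_center H \<inter> derived H (carrier H)"
    and iso: "(H Mod A) \<cong> UT n p" by (auto simp: stem_extension_def)
  have p: "1 < p" using assms(1) prime_gt_1_nat by blast
  have "A \<lhd> H" using central_normal[OF H A] Asub by blast
  then have K: "group (H Mod A)" by (rule normal.factorgroup_is_group)
  have G: "group (UT n p)" using UT_group[OF K iso p] assms(2) by simp
  show ?thesis
    using stem_center[OF H A Asub iso G UT_center_derived[OF G p assms(2)]] .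
qed

end
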